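(* Let $P$ be a complex polynomial of degree $d\ge2$ with connected Julia set $J_P$, let $\varphi$ be the finest monotone map of $J_P$ (extended canonically to the plane) semiconjugating $P$ to the topological polynomial $g$, and let $J_{\sim_P}=\varphi(J_P)$. Then the map $\Phi=\varphi\circ\mathrm{imp}:S^1\to J_{\sim_P}$ semiconjugates $\sigma_d:z\mapsto z^d$ on $S^1$ to $g|_{J_{\sim_P}}$, i.e. $g\circ\Phi=\Phi\circ\sigma_d$.
   Context: The finest monotone map of $J_P$ is the monotone (continuous, connected fibers) surjection onto a locally connected continuum through which every other such surjection factors monotonically; it is extended to the plane by collapsing topological hulls of its fibers and being a homeomorphism elsewhere, and there is a branched covering map $g$ of the plane with $\varphi\circ P=g\circ\varphi$. Let $\Psi:\widehat{\mathbb{C}}\setminus\overline{\mathbb{D}}\to U_\infty(P)\cup\{\infty\}$ be the Böttcher map; $\mathrm{imp}(\alpha)$ for $e^{2\pi i\alpha}\in S^1$ is the set of all limits $\lim\Psi(z_i)$, $|z_i|>1$, $z_i\to e^{2\pi i\alpha}$. Since $\varphi$ collapses each impression to a point, $\Phi(\alpha)=\varphi(\mathrm{imp}(\alpha))$ is a well-defined continuous function. *)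

theory Defs
  imports "HOL-Complex_Analysis.Complex_Analysis" "HOL-Computational_Algebra.Polynomial"
begin

definition filled_julia :: "complex poly \<Rightarrow> complex set" where
  "filled_julia P = {z. bounded (range (\<lambda>n. (poly P ^^ n) z))}"

definition julia :: "complex poly \<Rightarrow> complex set" where
  "julia P = frontier (filled_julia P)"

definition basin_inf :: "complex poly \<Rightarrow> complex set" where
  "basin_inf P = - filled_julia P"

text \<open>It is unique up to rotation by a (d-1)-th root of unity; every such choice is allowed.\<close>
definition boettcher :: "complex poly \<Rightarrow> (complex \<Rightarrow> complex) \<Rightarrow> bool" where
  "boettcher P \<Psi> \<longleftrightarrow>
     \<Psi> holomorphic_on {z. 1 < cmod z} \<and>
     inj_on \<Psi> {z. 1 < cmod z} \<and>
     \<Psi> ` {z. 1 < cmod z} = basin_inf P \<and>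
     (\<forall>z. 1 < cmod z \<longrightarrow> \<Psi> (z ^ degree P) = poly P (\<Psi> z))"

definition impression :: "(complex \<Rightarrow> complex) \<Rightarrow> complex \<Rightarrow> complex set" where
  "impression \<Psi> \<zeta> = {w. \<exists>z::nat \<Rightarrow> complex. (\<forall>i. 1 < cmod (z i)) \<and> z \<longlonglongrightarrow> \<zeta> \<and>
                              (\<lambda>i. \<Psi> (z i)) \<longlonglongrightarrow> w}"

definition monotone_map :: "'a::topological_space set \<Rightarrow> ('a \<Rightarrow> 'b::topological_space) \<Rightarrow> 'b set \<Rightarrow> bool" where
  "monotone_map S f T \<longleftrightarrow> continuous_on S f \<and> f ` S = T \<and>
     (\<forall>y\<in>T. connected {x\<in>S. f x = y})"

definition lc_continuum :: "'a::topological_space set \<Rightarrow> bool" where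
  "lc_continuum T \<longleftrightarrow> T \<noteq> {} \<and> compact T \<and> connected T \<and> locally connected T"

text \<open>Every locally connected continuum is metrizable and
  hence embeds in the Hilbert cube, so competitors are taken with values in nat \<Rightarrow> real
  (product topology), which covers all of them up to homeomorphism.\<close>
definition finest_monotone :: "complex set \<Rightarrow> (complex \<Rightarrow> complex) \<Rightarrow> bool" where
  "finest_monotone J \<phi> \<longleftrightarrow>
     monotone_map J \<phi> (\<phi> ` J) \<and> lc_continuum (\<phi> ` J) \<and>
     (\<forall>(m :: complex \<Rightarrow> (nat \<Rightarrow> real)) Y. monotone_map J m Y \<and> lc_continuum Y \<longrightarrow>
        (\<exists>h. monotone_map (\<phi> ` J) h Y \<and> (\<forall>z\<in>J. m z = h (\<phi> z))))"

definition top_hull :: "complex set \<Rightarrow> complex set" where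
  "top_hull A = A \<union> \<Union>{C. C \<in> components (- A) \<and> bounded C}"

definition canonical_extension :: "complex set \<Rightarrow> (complex \<Rightarrow> complex) \<Rightarrow> bool" where
  "canonical_extension J \<phi> \<longleftrightarrow>
     continuous_on UNIV \<phi> \<and> surj \<phi> \<and>
     (\<forall>y\<in>\<phi> ` J. {z. \<phi> z = y} = top_hull {z\<in>J. \<phi> z = y}) \<and>
     (\<exists>\<psi>. homeomorphism (- (\<phi> -` (\<phi> ` J))) (- (\<phi> ` J)) \<phi> \<psi>)"

definition branched_covering :: "(complex \<Rightarrow> complex) \<Rightarrow> bool" where
  "branched_covering g \<longleftrightarrow>
     continuous_on UNIV g \<and> surj g \<and>
     (\<forall>U. open U \<longrightarrow> open (g ` U)) \<and>
     (\<forall>K. compact K \<longrightarrow> compact (g -` K)) \<and>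
     (\<forall>y. finite (g -` {y}))"

text \<open>Phi(zeta) = phi(imp(zeta)) (well defined once phi collapses impressions).\<close>
definition Phi_map :: "(complex \<Rightarrow> complex) \<Rightarrow> (complex \<Rightarrow> complex) \<Rightarrow> complex \<Rightarrow> complex" where
  "Phi_map \<phi> \<Psi> \<zeta> = (THE y. \<phi> ` impression \<Psi> \<zeta> = {y})"

end

theory Submission
  imports Defs
begin

lemma imp_in_julia:
  assumes B: "boettcher P \<Psi>" and \<zeta>: "cmod \<zeta> = 1" and w: "w \<in> impression \<Psi> \<zeta>"
  shows "w \<in> julia P"
proof -
  obtain z where z1: "\<forall>i. 1 < cmod (z i)" and zl: "z \<longlonglongrightarrow> \<zeta>" and wl: "(\<lambda>i. \<Psi> (z i)) \<longlonglongrightarrow> w"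
    using w unfolding impression_def by blast
  have hol: "\<Psi> holomorphic_on {z. 1 < cmod z}" and inj: "inj_on \<Psi> {z. 1 < cmod z}"
    and img: "\<Psi> ` {z. 1 < cmod z} = basin_inf P" using B unfolding boettcher_def by auto
  have inb: "\<Psi> (z i) \<in> basin_inf P" for i using img z1 by blast
  have wcl: "w \<in> closure (basin_inf P)"
    using inb wl by (meson closure_sequential)
  have wK: "w \<in> filled_julia P"
  proof (rule ccontr)
    assume "w \<notin> filled_julia P"
    then have "w \<in> basin_inf P" by (simp add: basin_inf_def)
    then obtain u where u: "1 < cmod u" "w = \<Psi> u" using img by auto
    define r where "r = (cmod u - 1) / 2"
    have r: "r > 0" using u by (simp add: r_def)
    have sub: "ball u r \<subseteq> {z. 1 < cmod z}"
    proof
      fix x assume "x \<in> ball u r"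
      then have "cmod (u - x) < r" by (simp add: dist_norm)
      moreover have "cmod u \<le> cmod x + cmod (u - x)" by (metis add.commute diff_add_cancel norm_triangle_ineq)
      ultimately show "x \<in> {z. 1 < cmod z}" using u by (simp add: r_def)
    qed
    have op: "open (\<Psi> ` ball u r)"
      by (rule open_mapping_thm3[OF holomorphic_on_subset[OF hol sub] open_ball inj_on_subset[OF inj sub]])
    have "w \<in> \<Psi> ` ball u r" using u r by auto
    then have ev1: "eventually (\<lambda>i. \<Psi> (z i) \<in> \<Psi> ` ball u r) sequentially"
      using op wl by (simp add: tendsto_def)
    have "dist \<zeta> u > r"
    proof -
      have "cmod u \<le> cmod \<zeta> + cmod (u - \<zeta>)" by (metis add.commute diff_add_cancel norm_triangle_ineq)
      then show ?thesis using \<zeta> u by (simp add: r_def dist_norm norm_minus_commute)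
    qed
    then have "eventually (\<lambda>i. dist (z i) \<zeta> < dist \<zeta> u - r) sequentially"
      using zl by (simp add: tendsto_iff)
    then have "eventually (\<lambda>i. z i \<in> ball \<zeta> (dist \<zeta> u - r)) sequentially"
      by (simp add: dist_commute)
    then obtain i where i1: "\<Psi> (z i) \<in> \<Psi> ` ball u r" and i2: "z i \<in> ball \<zeta> (dist \<zeta> u - r)"
      using ev1 by (metis (mono_tags, lifting) eventually_conj_iff eventually_sequentially order_refl)
    then obtain b where b: "b \<in> ball u r" "\<Psi> (z i) = \<Psi> b" by auto
    have "z i = b" using inj b sub z1 by (meson inj_onD mem_Collect_eq subsetD)
    then have "dist u (z i) < r" using b by simp
    moreover have "dist \<zeta> (z i) < dist \<zeta> u - r" using i2 by simp
    moreover have "dist \<zeta> u \<le> dist \<zeta> (z i) + dist u (z i)" by (metis dist_commute dist_triangle)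
    ultimately show False by linarith
  qed
  have "w \<in> closure (- filled_julia P)" using wcl by (simp add: basin_inf_def)
  then show ?thesis using wK unfolding julia_def frontier_def
    by (simp add: interior_closure closure_subset[THEN subsetD])
qed

lemma imp_pow:
  assumes B: "boettcher P \<Psi>" and d: "degree P \<ge> 1" and w: "w \<in> impression \<Psi> \<zeta>"
  shows "poly P w \<in> impression \<Psi> (\<zeta> ^ degree P)"
proof -
  obtain z where z1: "\<forall>i. 1 < cmod (z i)" and zl: "z \<longlonglongrightarrow> \<zeta>" and wl: "(\<lambda>i. \<Psi> (z i)) \<longlonglongrightarrow> w"
    using w unfolding impression_def by blast
  have fe: "\<forall>z. 1 < cmod z \<longrightarrow> \<Psi> (z ^ degree P) = poly P (\<Psi> z)" using B unfolding boettcher_def by auto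
  have a: "\<forall>i. 1 < cmod (z i ^ degree P)"
    using z1 d by (simp add: norm_power one_less_power)
  have b: "(\<lambda>i. z i ^ degree P) \<longlonglongrightarrow> \<zeta> ^ degree P" using zl by (intro tendsto_intros)
  have c: "(\<lambda>i. poly P (\<Psi> (z i))) \<longlonglongrightarrow> poly P w"
    using wl by (rule tendsto_poly)
  have "(\<lambda>i. \<Psi> (z i ^ degree P)) \<longlonglongrightarrow> poly P w" using c fe z1 by simp
  then show ?thesis using a b unfolding impression_def
    by (intro CollectI exI[of _ "\<lambda>i. z i ^ degree P"]) simp
qed

theorem theorem4p3:
  fixes P :: "complex poly" and \<phi> g \<Psi> :: "complex \<Rightarrow> complex"
  assumes "degree P \<ge> 2"
    and "connected (julia P)"
    and "finest_monotone (julia P) \<phi>"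
    and "canonical_extension (julia P) \<phi>"
    and "branched_covering g"
    and "\<forall>z. \<phi> (poly P z) = g (\<phi> z)"
    and "boettcher P \<Psi>"
    and "\<forall>\<zeta>\<in>sphere 0 1. \<exists>y. \<phi> ` impression \<Psi> \<zeta> = {y}"
  shows "(\<forall>\<zeta>\<in>sphere 0 1. Phi_map \<phi> \<Psi> \<zeta> \<in> \<phi> ` julia P) \<and>
         (\<forall>\<zeta>\<in>sphere 0 1. g (Phi_map \<phi> \<Psi> \<zeta>) = Phi_map \<phi> \<Psi> (\<zeta> ^ degree P))"
proof -
  have key: "Phi_map \<phi> \<Psi> \<zeta> = \<phi> w" if "\<zeta> \<in> sphere 0 1" "w \<in> impression \<Psi> \<zeta>" for \<zeta> w
  proof -
    from bspec[OF assms(8) that(1)] obtain y where y: "\<phi> ` impression \<Psi> \<zeta> = {y}" ..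
    have "Phi_map \<phi> \<Psi> \<zeta> = y" unfolding Phi_map_def
    proof (rule the_equality)
      show "\<phi> ` impression \<Psi> \<zeta> = {y}" by (rule y)
    next
      fix ya assume "\<phi> ` impression \<Psi> \<zeta> = {ya}"
      then show "ya = y" using y by (metis singleton_inject)
    qed
    moreover have "\<phi> w \<in> \<phi> ` impression \<Psi> \<zeta>" using that(2) by (rule imageI)
    then have "\<phi> w = y" using y by simp
    ultimately show ?thesis by simp
  qed
  have ne: "\<exists>w. w \<in> impression \<Psi> \<zeta>" if "\<zeta> \<in> sphere 0 1" for \<zeta>
  proof -
    from bspec[OF assms(8) that] obtain y where y: "\<phi> ` impression \<Psi> \<zeta> = {y}" ..
    then have "\<phi> ` impression \<Psi> \<zeta> \<noteq> {}" by simp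
    then have "impression \<Psi> \<zeta> \<noteq> {}" by (simp only: image_is_empty) simp
    then show ?thesis by blast
  qed
  show ?thesis
  proof (intro conjI ballI)
    fix \<zeta> :: complex assume s: "\<zeta> \<in> sphere 0 1"
    then obtain w where w: "w \<in> impression \<Psi> \<zeta>" using ne by blast
    have "w \<in> julia P" using imp_in_julia[OF assms(7) _ w] s by simp
    then show "Phi_map \<phi> \<Psi> \<zeta> \<in> \<phi> ` julia P" using key[OF s w] by simp
  next
    fix \<zeta> :: complex assume s: "\<zeta> \<in> sphere 0 1"
    then obtain w where w: "w \<in> impression \<Psi> \<zeta>" using ne by blast
    have pw: "poly P w \<in> impression \<Psi> (\<zeta> ^ degree P)" using imp_pow[OF assms(7) _ w] assms(1) by simp
    have s2: "\<zeta> ^ degree P \<in> sphere 0 1" using s by (simp add: norm_power)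
    show "g (Phi_map \<phi> \<Psi> \<zeta>) = Phi_map \<phi> \<Psi> (\<zeta> ^ degree P)"
      using key[OF s w] key[OF s2 pw] assms(6) by simp
  qed
qed

end
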